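(* Let $d:\mathbb{Z}\to\mathbb{C}$ be bounded and $(Ju)(n)=u(n-1)+d(n)u(n)+u(n+1)$ on $\ell^2(\mathbb{Z})$. Suppose that $\Im(d(n))\to0$ as $n\to+\infty$ (or as $n\to-\infty$) and that there exists $m\in\mathbb{Z}$ with $\Im(d(m))\ne0$ and $\Im(d(m+1))\ne0$. Then $J$ has no boundary eigenvalues.
   Context: The numerical range is $\operatorname{Num}(J)=\{\langle Ju,u\rangle:\|u\|=1\}$, and a boundary eigenvalue of $J$ is an eigenvalue of $J$ lying in the topological boundary of $\operatorname{Num}(J)$. *)

theory Defs
  imports "HOL-Analysis.Analysis"
begin

definition l2Z :: "(int \<Rightarrow> complex) set" where
  "l2Z = {u. (\<lambda>n. (cmod (u n))^2) summable_on UNIV}"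

definition l2Z_inner :: "(int \<Rightarrow> complex) \<Rightarrow> (int \<Rightarrow> complex) \<Rightarrow> complex" where
  "l2Z_inner v u = (\<Sum>\<^sub>\<infinity>n. v n * cnj (u n))"

definition l2Z_norm :: "(int \<Rightarrow> complex) \<Rightarrow> real" where
  "l2Z_norm u = sqrt (\<Sum>\<^sub>\<infinity>n. (cmod (u n))^2)"

definition jacobiJ :: "(int \<Rightarrow> complex) \<Rightarrow> (int \<Rightarrow> complex) \<Rightarrow> (int \<Rightarrow> complex)" where
  "jacobiJ d u = (\<lambda>n. u (n - 1) + d n * u n + u (n + 1))"

definition numrange :: "(int \<Rightarrow> complex) \<Rightarrow> complex set" where
  "numrange d = {l2Z_inner (jacobiJ d u) u | u. u \<in> l2Z \<and> l2Z_norm u = 1}"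

definition is_eigenvalue :: "(int \<Rightarrow> complex) \<Rightarrow> complex \<Rightarrow> bool" where
  "is_eigenvalue d z \<longleftrightarrow> (\<exists>u \<in> l2Z. u \<noteq> (\<lambda>_. 0) \<and> jacobiJ d u = (\<lambda>n. z * u n))"

definition is_boundary_eigenvalue :: "(int \<Rightarrow> complex) \<Rightarrow> complex \<Rightarrow> bool" where
  "is_boundary_eigenvalue d z \<longleftrightarrow> is_eigenvalue d z \<and> z \<in> frontier (numrange d)"

end

theory Submission
  imports Defs
begin


lemma bij_shift: "bij_betw (\<lambda>n::int. n + k) UNIV UNIV"
  by (rule bij_betwI[where g="\<lambda>n. n - k"]) auto

lemma l2_shift: assumes "u \<in> l2Z" shows "(\<lambda>n. u (n + k)) \<in> l2Z"
proof -
  have "(\<lambda>n. (cmod (u n))^2) summable_on UNIV" using assms by (simp add: l2Z_def)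
  then have "(\<lambda>n. (\<lambda>m. (cmod (u m))^2) (n + k)) summable_on UNIV"
    using summable_on_reindex_bij_betw[OF bij_shift[of k], of "\<lambda>m. (cmod (u m))^2"] by simp
  then show ?thesis by (simp add: l2Z_def)
qed

lemma l2_shiftm: assumes "u \<in> l2Z" shows "(\<lambda>n. u (n - 1)) \<in> l2Z"
  using l2_shift[OF assms, of "-1"] by (simp only: diff_conv_add_uminus)

lemma l2_scale: assumes "u \<in> l2Z" shows "(\<lambda>n. c * u n) \<in> l2Z"
proof -
  have "(\<lambda>n. (cmod c)^2 * (cmod (u n))^2) summable_on UNIV"
    using assms by (intro summable_on_cmult_right) (simp add: l2Z_def)
  then show ?thesis by (simp add: l2Z_def norm_mult power_mult_distrib)
qed

lemma l2_add: assumes "u \<in> l2Z" "v \<in> l2Z" shows "(\<lambda>n. u n + v n) \<in> l2Z"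
proof -
  have s: "(\<lambda>n. 2 * (cmod (u n))^2 + 2 * (cmod (v n))^2) summable_on UNIV"
    using assms by (intro summable_on_add summable_on_cmult_right) (auto simp: l2Z_def)
  have "(cmod (u n + v n))^2 \<le> 2 * (cmod (u n))^2 + 2 * (cmod (v n))^2" for n
  proof -
    have "cmod (u n + v n) \<le> cmod (u n) + cmod (v n)" by (rule norm_triangle_ineq)
    then have "(cmod (u n + v n))^2 \<le> (cmod (u n) + cmod (v n))^2"
      by (simp add: power_mono)
    also have "\<dots> \<le> 2 * (cmod (u n))^2 + 2 * (cmod (v n))^2"
    proof -
      have "0 \<le> (cmod (u n) - cmod (v n))^2" by simp
      then show ?thesis by (simp add: power2_sum power2_diff)
    qed
    finally show ?thesis .
  qed
  then show ?thesis unfolding l2Z_def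
    by (auto intro: summable_on_comparison_test[OF s])
qed

lemma l2_mult: assumes "u \<in> l2Z" "bounded (range d)" shows "(\<lambda>n. d n * u n) \<in> l2Z"
proof -
  obtain M where M: "\<And>n. cmod (d n) \<le> M" using assms(2) unfolding bounded_iff by auto
  have s: "(\<lambda>n. M^2 * (cmod (u n))^2) summable_on UNIV"
    using assms by (intro summable_on_cmult_right) (auto simp: l2Z_def)
  have "(cmod (d n * u n))^2 \<le> M^2 * (cmod (u n))^2" for n
    by (simp add: norm_mult power_mult_distrib mult_right_mono power_mono M)
  then show ?thesis unfolding l2Z_def
    by (auto intro: summable_on_comparison_test[OF s])
qed

lemma l2_jacobi: assumes "u \<in> l2Z" "bounded (range d)" shows "jacobiJ d u \<in> l2Z"
  unfolding jacobiJ_def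
  by (intro l2_add l2_shiftm l2_shift l2_mult assms)

lemma inner_abs: assumes "u \<in> l2Z" "v \<in> l2Z" shows "(\<lambda>n. norm (v n * cnj (u n))) summable_on UNIV"
proof -
  have s: "(\<lambda>n. (cmod (v n))^2 + (cmod (u n))^2) summable_on UNIV"
    using assms by (intro summable_on_add) (auto simp: l2Z_def)
  have "(\<lambda>n. norm ((cmod (v n))^2 + (cmod (u n))^2)) summable_on UNIV"
    using s by simp
  then show "(\<lambda>n. norm (v n * cnj (u n))) summable_on UNIV"
  proof (rule Infinite_Sum.abs_summable_on_comparison_test)
    fix n
    have "cmod (v n) * cmod (u n) \<le> (cmod (v n))^2 + (cmod (u n))^2"
      using sum_squares_bound[of "cmod (v n)" "cmod (u n)"]
        mult_nonneg_nonneg[OF norm_ge_zero norm_ge_zero, of "v n" "u n"] by linarith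
    then show "norm (v n * cnj (u n)) \<le> norm ((cmod (v n))^2 + (cmod (u n))^2)"
      by (simp add: norm_mult)
  qed
qed

lemma inner_summable: assumes "u \<in> l2Z" "v \<in> l2Z"
  shows "(\<lambda>n. v n * cnj (u n)) summable_on UNIV"
  by (rule abs_summable_summable) (use inner_abs[OF assms] in simp)

lemma inner_add_left: assumes "a \<in> l2Z" "b \<in> l2Z" "u \<in> l2Z"
  shows "l2Z_inner (\<lambda>n. a n + b n) u = l2Z_inner a u + l2Z_inner b u"
  unfolding l2Z_inner_def
  by (simp add: distrib_right infsum_add inner_summable assms)

lemma inner_scale_left: "l2Z_inner (\<lambda>n. c * a n) u = c * l2Z_inner a u"
  unfolding l2Z_inner_def
  by (subst infsum_cmult_right'[symmetric]) (simp add: mult.assoc)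

lemma inner_cnj: "l2Z_inner u v = cnj (l2Z_inner v u)"
  unfolding l2Z_inner_def
  by (subst infsum_cnj[symmetric]) (simp add: mult.commute)

lemma inner_add_right: assumes "a \<in> l2Z" "b \<in> l2Z" "u \<in> l2Z"
  shows "l2Z_inner u (\<lambda>n. a n + b n) = l2Z_inner u a + l2Z_inner u b"
  using inner_add_left[OF assms] by (metis inner_cnj complex_cnj_add)

lemma inner_scale_right: "l2Z_inner u (\<lambda>n. c * a n) = cnj c * l2Z_inner u a"
  by (metis inner_cnj inner_scale_left complex_cnj_mult)

lemma l2Z_norm_nonneg: "l2Z_norm u \<ge> 0"
proof -
  have nn: "(\<Sum>\<^sub>\<infinity>n. (cmod (u n))^2) \<ge> 0" by (rule infsum_nonneg) (rule zero_le_power2)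
  then show ?thesis by (simp add: l2Z_norm_def)
qed

lemma inner_self: assumes "u \<in> l2Z"
  shows "l2Z_inner u u = complex_of_real ((l2Z_norm u)^2)"
proof -
  have s: "(\<lambda>n. (cmod (u n))^2) summable_on UNIV" using assms by (simp add: l2Z_def)
  have nn: "(\<Sum>\<^sub>\<infinity>n. (cmod (u n))^2) \<ge> 0" by (rule infsum_nonneg) (rule zero_le_power2)
  have "l2Z_inner u u = (\<Sum>\<^sub>\<infinity>n. complex_of_real ((cmod (u n))^2))"
    unfolding l2Z_inner_def by (simp only: complex_norm_square)
  also have "\<dots> = complex_of_real (\<Sum>\<^sub>\<infinity>n. (cmod (u n))^2)"
    by (rule infsumI, rule has_sum_of_real, rule has_sum_infsum, rule s)
  finally show ?thesis using nn by (simp add: l2Z_norm_def)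
qed

lemma norm_zero: assumes "u \<in> l2Z" "l2Z_norm u = 0" shows "u = (\<lambda>_. 0)"
proof
  fix n
  have s: "(\<lambda>n. (cmod (u n))^2) summable_on UNIV" using assms by (simp add: l2Z_def)
  have nn: "(\<Sum>\<^sub>\<infinity>n. (cmod (u n))^2) \<ge> 0" by (rule infsum_nonneg) (rule zero_le_power2)
  have "(\<Sum>\<^sub>\<infinity>n. (cmod (u n))^2) = 0" using assms(2) nn by (simp add: l2Z_norm_def)
  then have "(cmod (u n))^2 = 0" by (intro nonneg_infsum_le_0D[OF _ s]) auto
  then show "u n = 0" by simp
qed

lemma inner_shift: assumes "v \<in> l2Z" "u \<in> l2Z"
  shows "l2Z_inner (\<lambda>n. v (n - 1)) u = l2Z_inner v (\<lambda>n. u (n + 1))"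
proof -
  have "l2Z_inner (\<lambda>n. v (n - 1)) u = (\<Sum>\<^sub>\<infinity>n. (\<lambda>m. v m * cnj (u (m + 1))) (n + (-1)))"
    unfolding l2Z_inner_def by simp
  also have "\<dots> = (\<Sum>\<^sub>\<infinity>m. v m * cnj (u (m + 1)))"
    by (rule infsum_reindex_bij_betw[OF bij_shift])
  finally show ?thesis by (simp add: l2Z_inner_def)
qed

lemma inner_shift2: assumes "v \<in> l2Z" "u \<in> l2Z"
  shows "l2Z_inner (\<lambda>n. v (n + 1)) u = l2Z_inner v (\<lambda>n. u (n - 1))"
proof -
  have "l2Z_inner (\<lambda>n. v (n + 1)) u = (\<Sum>\<^sub>\<infinity>n. (\<lambda>m. v m * cnj (u (m - 1))) (n + 1))"
    unfolding l2Z_inner_def by simp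
  also have "\<dots> = (\<Sum>\<^sub>\<infinity>m. v m * cnj (u (m - 1)))"
    by (rule infsum_reindex_bij_betw[OF bij_shift])
  finally show ?thesis by (simp add: l2Z_inner_def)
qed

lemma inner_mult: "l2Z_inner (\<lambda>n. d n * v n) u = l2Z_inner v (\<lambda>n. cnj (d n) * u n)"
  unfolding l2Z_inner_def by (simp add: mult_ac)

lemma adjoint: assumes "v \<in> l2Z" "u \<in> l2Z" "bounded (range d)"
  shows "l2Z_inner (jacobiJ d v) u = l2Z_inner v (jacobiJ (\<lambda>n. cnj (d n)) u)"
proof -
  have bd: "bounded (range (\<lambda>n. cnj (d n)))"
    using assms(3) unfolding bounded_iff by auto
  have "l2Z_inner (jacobiJ d v) u
      = l2Z_inner (\<lambda>n. v (n - 1)) u + l2Z_inner (\<lambda>n. d n * v n) u + l2Z_inner (\<lambda>n. v (n + 1)) u"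
    unfolding jacobiJ_def
    by (simp add: inner_add_left l2_add l2_shift l2_shiftm l2_mult assms)
  also have "\<dots> = l2Z_inner v (\<lambda>n. u (n + 1)) + l2Z_inner v (\<lambda>n. cnj (d n) * u n)
       + l2Z_inner v (\<lambda>n. u (n - 1))"
    by (simp add: inner_shift inner_shift2 inner_mult assms)
  also have "\<dots> = l2Z_inner v (jacobiJ (\<lambda>n. cnj (d n)) u)"
    unfolding jacobiJ_def
    by (simp add: inner_add_right l2_add l2_shift l2_shiftm l2_mult assms bd)
  finally show ?thesis .
qed



lemma solve_local:
  fixes a :: real and z B :: complex
  assumes a: "a > 0"
  shows "\<exists>e>0. \<forall>\<zeta>. cmod (\<zeta> - z) < e \<longrightarrow>
     (\<exists>t. \<zeta> = (z + t * of_real a + of_real ((cmod t)^2) * B) / (1 + of_real ((cmod t)^2 * a)))"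
proof -
  define C where "C = cmod (B - z * of_real a)"
  define r0 where "r0 = min 1 (a / (2 * (C + 1)))"
  define e where "e = r0 * a / (4 * (1 + a))"
  have C0: "C \<ge> 0" by (simp add: C_def)
  have r0p: "r0 > 0" using a C0 by (simp add: r0_def)
  have r01: "r0 \<le> 1" by (simp add: r0_def)
  have ep: "e > 0" using r0p a by (simp add: e_def)
  have "\<forall>\<zeta>. cmod (\<zeta> - z) < e \<longrightarrow>
     (\<exists>t. \<zeta> = (z + t * of_real a + of_real ((cmod t)^2) * B) / (1 + of_real ((cmod t)^2 * a)))"
  proof (intro allI impI)
    fix \<zeta> assume ze: "cmod (\<zeta> - z) < e"
    define h where "h = (\<lambda>r::real. (\<zeta> - z) * (1 + of_real (r^2 * a)) - of_real (r^2) * (B - z * of_real a))"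
    define g where "g = (\<lambda>r. r * a - cmod (h r))"
    have g0: "g 0 \<le> 0" by (simp add: g_def h_def)
    have "r0^2 * C \<le> r0 * a / 2"
    proof -
      have "r0 \<le> a / (2 * (C + 1))" by (simp add: r0_def)
      then have "r0 * C \<le> (a / (2 * (C + 1))) * C" using C0 by (rule mult_right_mono)
      also have "\<dots> \<le> a / 2" using a C0 by (simp add: field_simps)
      finally have "r0 * C \<le> a / 2" .
      then have "r0 * (r0 * C) \<le> r0 * (a/2)" using r0p by (simp add: mult_left_mono)
      then show ?thesis by (simp add: power2_eq_square mult_ac)
    qed
    moreover have "cmod (\<zeta> - z) * (1 + r0^2 * a) < r0 * a / 2"
    proof -
      have "1 + r0^2 * a \<le> 1 + a" using r01 r0p a
        by (simp add: power_le_one mult_left_le_one_le)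
      then have "cmod (\<zeta> - z) * (1 + r0^2 * a) \<le> cmod (\<zeta> - z) * (1 + a)"
        by (simp add: mult_left_mono)
      also have "\<dots> \<le> e * (1 + a)" using ze a by (simp add: mult_right_mono)
      also have "\<dots> = r0 * a / 4" using a unfolding e_def by (simp add: field_simps)
      also have "\<dots> < r0 * a / 2" using r0p a by simp
      finally show ?thesis .
    qed
    moreover have "cmod (h r0) \<le> cmod (\<zeta> - z) * (1 + r0^2 * a) + r0^2 * C"
    proof -
      have "cmod (h r0) \<le> cmod ((\<zeta> - z) * (1 + of_real (r0^2 * a))) + cmod (of_real (r0^2) * (B - z * of_real a))"
        unfolding h_def by (rule norm_triangle_ineq4)
      also have "\<dots> = cmod (\<zeta> - z) * (1 + r0^2 * a) + r0^2 * C"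
      proof -
        have "1 + complex_of_real (r0^2*a) = complex_of_real (1 + r0^2*a)" by simp
        then have e1: "cmod (1 + complex_of_real (r0^2*a)) = 1 + r0^2 * a"
          using a by (simp only: norm_of_real) simp
        have e2: "cmod (complex_of_real (r0^2)) = r0^2" by (simp only: norm_of_real) simp
        show ?thesis by (simp only: norm_mult e1 e2 C_def)
      qed
      finally show ?thesis .
    qed
    ultimately have gr0: "g r0 \<ge> 0" by (simp add: g_def)
    have cont: "\<forall>x. 0 \<le> x \<and> x \<le> r0 \<longrightarrow> isCont g x"
      unfolding g_def h_def by (intro allI impI continuous_intros)
    obtain r where r: "0 \<le> r" "r \<le> r0" "g r = 0"
      using IVT[of g 0 0 r0, OF g0 gr0 _ cont] r0p by auto
    define t where "t = h r / of_real a"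
    have "cmod t = cmod (h r) / a" using a by (simp add: t_def norm_divide)
    also have "cmod (h r) = r * a" using r(3) by (simp add: g_def)
    finally have ct: "cmod t = r" using a by simp
    have ta: "t * of_real a = h r" using a by (simp add: t_def)
    have nz: "1 + complex_of_real (r^2 * a) \<noteq> 0"
    proof -
      have "r^2 * a \<ge> 0" using a by simp
      then have "complex_of_real (1 + r^2 * a) \<noteq> 0" by (simp only: of_real_eq_0_iff)
      moreover have "1 + complex_of_real (r^2*a) = complex_of_real (1 + r^2*a)" by simp
      ultimately show ?thesis by simp
    qed
    have "\<zeta> = (z + t * of_real a + of_real ((cmod t)^2) * B) / (1 + of_real ((cmod t)^2 * a))"
      using nz unfolding ct ta h_def
      by (simp add: field_simps)
    then show "\<exists>t. \<zeta> = (z + t * of_real a + of_real ((cmod t)^2) * B) / (1 + of_real ((cmod t)^2 * a))"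
      by blast
  qed
  then show ?thesis using ep by blast
qed



lemma jacobi_lin: "jacobiJ d (\<lambda>n. u n + t * w n) = (\<lambda>n. jacobiJ d u n + t * jacobiJ d w n)"
  by (auto simp: jacobiJ_def algebra_simps)

lemma jacobi_scale: "jacobiJ d (\<lambda>n. c * w n) = (\<lambda>n. c * jacobiJ d w n)"
  by (auto simp: jacobiJ_def algebra_simps)

lemma bounded_cnj: "bounded (range d) \<Longrightarrow> bounded (range (\<lambda>n. cnj (d n)))"
  unfolding bounded_iff by auto

lemma inner_lin_right: assumes "a \<in> l2Z" "b \<in> l2Z" "x \<in> l2Z"
  shows "l2Z_inner x (\<lambda>n. a n + t * b n) = l2Z_inner x a + cnj t * l2Z_inner x b"
  by (simp only: inner_add_right[OF assms(1) l2_scale[OF assms(2)] assms(3)] inner_scale_right)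

lemma inner_lin_left: assumes "a \<in> l2Z" "b \<in> l2Z" "x \<in> l2Z"
  shows "l2Z_inner (\<lambda>n. a n + t * b n) x = l2Z_inner a x + t * l2Z_inner b x"
  by (simp only: inner_add_left[OF assms(1) l2_scale[OF assms(2)] assms(3)] inner_scale_left)

lemma numrange_member:
  assumes bd: "bounded (range d)" and v: "v \<in> l2Z" and N: "l2Z_norm v > 0"
  shows "l2Z_inner (jacobiJ d v) v / of_real ((l2Z_norm v)^2) \<in> numrange d"
proof -
  define N where "N = l2Z_norm v"
  define c where "c = complex_of_real (1 / N)"
  define x where "x = (\<lambda>n. c * v n)"
  have Np: "N > 0" using N by (simp add: N_def)
  have xl: "x \<in> l2Z" unfolding x_def by (rule l2_scale[OF v])
  have cc: "c * cnj c = complex_of_real (1 / N^2)"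
    by (simp add: c_def power2_eq_square)
  have "l2Z_inner x x = c * cnj c * l2Z_inner v v"
    unfolding x_def by (simp add: inner_scale_left inner_scale_right)
  also have "\<dots> = complex_of_real (1 / N^2 * N^2)"
    unfolding cc inner_self[OF v] N_def by simp
  also have "\<dots> = 1" using Np by simp
  finally have "complex_of_real ((l2Z_norm x)^2) = 1" using inner_self[OF xl] by simp
  then have "(l2Z_norm x)^2 = 1" by (metis of_real_eq_1_iff)
  then have nx: "l2Z_norm x = 1" using l2Z_norm_nonneg[of x]
    by (simp add: power2_eq_1_iff)
  have "l2Z_inner (jacobiJ d x) x = c * cnj c * l2Z_inner (jacobiJ d v) v"
    unfolding x_def jacobi_scale by (simp add: inner_scale_left inner_scale_right)
  also have "\<dots> = l2Z_inner (jacobiJ d v) v / of_real ((l2Z_norm v)^2)"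
    unfolding cc N_def by (simp add: field_simps)
  finally have eq: "l2Z_inner (jacobiJ d x) x = l2Z_inner (jacobiJ d v) v / of_real ((l2Z_norm v)^2)" .
  show ?thesis unfolding numrange_def using xl nx eq[symmetric] by (intro CollectI exI[of _ x]) simp
qed

lemma interior_lemma:
  assumes bd: "bounded (range d)" and u: "u \<in> l2Z" and nu: "l2Z_norm u = 1"
    and eig: "jacobiJ d u = (\<lambda>n. z * u n)"
    and ne: "jacobiJ (\<lambda>n. cnj (d n)) u \<noteq> (\<lambda>n. cnj z * u n)"
  shows "z \<in> interior (numrange d)"
proof -
  define Js where "Js = jacobiJ (\<lambda>n. cnj (d n)) u"
  define w where "w = (\<lambda>n. Js n + (- cnj z) * u n)"
  have bd': "bounded (range (\<lambda>n. cnj (d n)))" using bounded_cnj[OF bd] .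
  have Jsl: "Js \<in> l2Z" unfolding Js_def by (rule l2_jacobi[OF u bd'])
  have wl: "w \<in> l2Z" unfolding w_def by (intro l2_add l2_scale Jsl u)
  have uu: "l2Z_inner u u = 1" using inner_self[OF u] nu by simp
  have h1: "l2Z_inner u Js = z"
  proof -
    have "l2Z_inner u Js = l2Z_inner (jacobiJ d u) u" unfolding Js_def using adjoint[OF u u bd] by simp
    also have "\<dots> = z" unfolding eig by (simp add: inner_scale_left uu)
    finally show ?thesis .
  qed
  have uw: "l2Z_inner u w = 0"
  proof -
    have "l2Z_inner u w = l2Z_inner u Js + l2Z_inner u (\<lambda>n. (- cnj z) * u n)"
      unfolding w_def by (rule inner_add_right[OF Jsl l2_scale[OF u] u])
    also have "\<dots> = 0" by (simp only: inner_scale_right h1 uu) simp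
    finally show ?thesis .
  qed
  have wu: "l2Z_inner w u = 0" using inner_cnj[of w u] uw by simp
  have wne: "w \<noteq> (\<lambda>_. 0)"
  proof
    assume "w = (\<lambda>_. 0)"
    then have "\<And>n. Js n = cnj z * u n" unfolding w_def by (metis add_eq_0_iff mult_minus_left minus_minus)
    then show False using ne unfolding Js_def by auto
  qed
  have nwp: "l2Z_norm w > 0" using norm_zero[OF wl] wne l2Z_norm_nonneg[of w] by force
  define a where "a = (l2Z_norm w)^2"
  have ap: "a > 0" using nwp by (simp add: a_def)
  have ww: "l2Z_inner w w = of_real a" using inner_self[OF wl] by (simp add: a_def)
  have Jsw: "Js = (\<lambda>n. w n + cnj z * u n)" by (auto simp: w_def)
  have A: "l2Z_inner (jacobiJ d w) u = of_real a"
  proof -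
    have "l2Z_inner (jacobiJ d w) u = l2Z_inner w Js" unfolding Js_def using adjoint[OF wl u bd] by simp
    also have "\<dots> = of_real a" unfolding Jsw
      by (simp add: inner_add_right inner_scale_right wl u l2_scale ww wu)
    finally show ?thesis .
  qed
  have Juw: "l2Z_inner (jacobiJ d u) w = 0" unfolding eig by (simp add: inner_scale_left uw)
  define B where "B = l2Z_inner (jacobiJ d w) w"
  have Jwl: "jacobiJ d w \<in> l2Z" by (rule l2_jacobi[OF wl bd])
  have Jul: "jacobiJ d u \<in> l2Z" by (rule l2_jacobi[OF u bd])
  have mem: "(z + t * of_real a + of_real ((cmod t)^2) * B) / (1 + of_real ((cmod t)^2 * a)) \<in> numrange d"
    for t
  proof -
    define v where "v = (\<lambda>n. u n + t * w n)"
    have vl: "v \<in> l2Z" unfolding v_def by (intro l2_add l2_scale u wl)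
    have tt: "t * cnj t = of_real ((cmod t)^2)" by (rule complex_norm_square[symmetric])
    have Jv: "jacobiJ d v = (\<lambda>n. jacobiJ d u n + t * jacobiJ d w n)" unfolding v_def by (rule jacobi_lin)
    have Juu: "l2Z_inner (jacobiJ d u) u = z" unfolding eig by (simp add: inner_scale_left uu)
    have i1: "l2Z_inner (jacobiJ d u) v = z"
      unfolding v_def inner_lin_right[OF u wl Jul] Juw Juu by simp
    have i2: "l2Z_inner (jacobiJ d w) v = of_real a + cnj t * B"
      unfolding v_def inner_lin_right[OF u wl Jwl] A B_def by simp
    have iv: "l2Z_inner (jacobiJ d v) v = z + t * of_real a + of_real ((cmod t)^2) * B"
      unfolding Jv inner_lin_left[OF Jul Jwl vl] i1 i2 tt[symmetric] by (simp add: algebra_simps)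
    have vv: "l2Z_inner v v = 1 + of_real ((cmod t)^2 * a)"
    proof -
      have "l2Z_inner v v = l2Z_inner u v + t * l2Z_inner w v"
        unfolding v_def by (rule inner_lin_left[OF u wl vl[unfolded v_def]])
      also have "\<dots> = 1 + t * cnj t * of_real a"
        unfolding v_def inner_lin_right[OF u wl u] inner_lin_right[OF u wl wl] uu uw wu ww by simp
      finally show ?thesis unfolding tt by simp
    qed
    have nv2: "(l2Z_norm v)^2 = 1 + (cmod t)^2 * a"
    proof -
      have "complex_of_real ((l2Z_norm v)^2) = complex_of_real (1 + (cmod t)^2 * a)"
        using inner_self[OF vl] vv by simp
      then show ?thesis by (simp only: of_real_eq_iff)
    qed
    have "(l2Z_norm v)^2 > 0" unfolding nv2 using ap by (simp add: add_pos_nonneg)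
    then have nvp: "l2Z_norm v > 0" using l2Z_norm_nonneg[of v] by (auto simp: le_less)
    have "l2Z_inner (jacobiJ d v) v / of_real ((l2Z_norm v)^2) \<in> numrange d"
      by (rule numrange_member[OF bd vl nvp])
    then show ?thesis unfolding iv nv2 by simp
  qed
  obtain e where e: "e > 0" "\<And>\<zeta>. cmod (\<zeta> - z) < e \<Longrightarrow>
     (\<exists>t. \<zeta> = (z + t * of_real a + of_real ((cmod t)^2) * B) / (1 + of_real ((cmod t)^2 * a)))"
    using solve_local[OF ap, of z B] by blast
  have "ball z e \<subseteq> numrange d"
  proof
    fix \<zeta> assume "\<zeta> \<in> ball z e"
    then have "cmod (\<zeta> - z) < e" by (simp add: dist_norm norm_minus_commute)
    then obtain t where "\<zeta> = (z + t * of_real a + of_real ((cmod t)^2) * B) / (1 + of_real ((cmod t)^2 * a))"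
      using e(2) by blast
    then show "\<zeta> \<in> numrange d" using mem by simp
  qed
  then show ?thesis using e(1) mem_interior by blast
qed

lemma no_two_zeros:
  assumes eig: "jacobiJ d u = (\<lambda>n. z * u n)" and z1: "u m = 0" and z2: "u (m + 1) = 0"
  shows "u n = 0"
proof -
  have rec: "\<And>n. u (n - 1) + d n * u n + u (n + 1) = z * u n"
    using eig unfolding jacobiJ_def by (metis)
  have fw: "u (m + int k) = 0 \<and> u (m + int k + 1) = 0" for k
  proof (induction k)
    case 0 then show ?case using z1 z2 by simp
  next
    case (Suc k)
    have h: "u (m + int k + 1 + 1) = 0"
      using rec[of "m + int k + 1"] Suc by simp
    have a: "u (m + int (Suc k)) = 0" using Suc by (simp add: algebra_simps)
    have b: "u (m + int (Suc k) + 1) = 0" using h by (simp add: algebra_simps)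
    show ?case using a b by blast
  qed
  have bw: "u (m - int k) = 0 \<and> u (m - int k + 1) = 0" for k
  proof (induction k)
    case 0 then show ?case using z1 z2 by simp
  next
    case (Suc k)
    have "u (m - int k - 1) = 0"
      using rec[of "m - int k"] Suc by simp
    then show ?case using Suc by (simp add: algebra_simps)
  qed
  show ?thesis
  proof (cases "n \<ge> m")
    case True
    then have "n = m + int (nat (n - m))" by simp
    then show ?thesis using fw[of "nat (n - m)"] by metis
  next
    case False
    then have "n = m - int (nat (m - n))" by simp
    then show ?thesis using bw[of "nat (m - n)"] by metis
  qed
qed

theorem mainTheorem9:
  fixes d :: "int \<Rightarrow> complex"
  assumes "bounded (range d)"
    and "((\<lambda>n. Im (d n)) \<longlongrightarrow> 0) at_top \<or> ((\<lambda>n. Im (d n)) \<longlongrightarrow> 0) at_bot"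
    and "\<exists>m. Im (d m) \<noteq> 0 \<and> Im (d (m + 1)) \<noteq> 0"
  shows "\<not> (\<exists>z. is_boundary_eigenvalue d z)"
proof
  assume "\<exists>z. is_boundary_eigenvalue d z"
  then obtain z u0 where u0: "u0 \<in> l2Z" "u0 \<noteq> (\<lambda>_. 0)" "jacobiJ d u0 = (\<lambda>n. z * u0 n)"
    and fr: "z \<in> frontier (numrange d)"
    unfolding is_boundary_eigenvalue_def is_eigenvalue_def by blast
  have n0: "l2Z_norm u0 > 0" using norm_zero[OF u0(1)] u0(2) l2Z_norm_nonneg[of u0] by force
  define c where "c = complex_of_real (1 / l2Z_norm u0)"
  define u where "u = (\<lambda>n. c * u0 n)"
  have ul: "u \<in> l2Z" unfolding u_def by (rule l2_scale[OF u0(1)])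
  have "complex_of_real ((l2Z_norm u)^2) = c * cnj c * complex_of_real ((l2Z_norm u0)^2)"
    using inner_self[OF ul] inner_self[OF u0(1)] unfolding u_def
    by (simp add: inner_scale_left inner_scale_right mult_ac)
  also have "\<dots> = 1" using n0 by (simp add: c_def power2_eq_square)
  finally have "(l2Z_norm u)^2 = 1" by (metis of_real_eq_1_iff)
  then have nu: "l2Z_norm u = 1" using l2Z_norm_nonneg[of u] by (simp add: power2_eq_1_iff)
  have eig: "jacobiJ d u = (\<lambda>n. z * u n)"
    unfolding u_def jacobi_scale u0(3) by (auto simp: mult_ac)
  have cne: "c \<noteq> 0" using n0 by (simp add: c_def)
  have une: "\<exists>n. u n \<noteq> 0"
  proof -
    obtain n where "u0 n \<noteq> 0" using u0(2) by auto
    then show ?thesis using cne by (auto simp: u_def)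
  qed
  have "z \<notin> interior (numrange d)" using fr by (simp add: frontier_def)
  then have adj: "jacobiJ (\<lambda>n. cnj (d n)) u = (\<lambda>n. cnj z * u n)"
    using interior_lemma[OF assms(1) ul nu eig] by blast
  have key: "u n \<noteq> 0 \<Longrightarrow> Im (d n) = Im z" for n
  proof -
    assume un: "u n \<noteq> 0"
    have e1: "u (n - 1) + d n * u n + u (n + 1) = z * u n"
      using fun_cong[OF eig, of n] by (simp add: jacobiJ_def)
    have e2: "u (n - 1) + cnj (d n) * u n + u (n + 1) = cnj z * u n"
      using fun_cong[OF adj, of n] by (simp add: jacobiJ_def)
    have "(d n - cnj (d n)) * u n = (u (n - 1) + d n * u n + u (n + 1)) - (u (n - 1) + cnj (d n) * u n + u (n + 1))"
      by (simp add: algebra_simps)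
    also have "\<dots> = (z - cnj z) * u n" unfolding e1 e2 by (simp add: algebra_simps)
    finally have "(d n - cnj (d n)) * u n = (z - cnj z) * u n" .
    then have "d n - cnj (d n) = z - cnj z" using un by simp
    then have "Im (d n - cnj (d n)) = Im (z - cnj z)" by simp
    then show ?thesis by simp
  qed
  have Imz: "Im z = 0"
  proof (rule ccontr)
    assume nz: "Im z \<noteq> 0"
    have "\<exists>N. u N = 0 \<and> u (N + 1) = 0"
      using assms(2)
    proof
      assume "((\<lambda>n. Im (d n)) \<longlongrightarrow> 0) at_top"
      then have "\<forall>\<^sub>F n in at_top. dist (Im (d n)) 0 < \<bar>Im z\<bar>"
        using nz by (intro tendstoD) auto
      then obtain N where N: "\<And>n. n \<ge> N \<Longrightarrow> \<bar>Im (d n)\<bar> < \<bar>Im z\<bar>"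
        unfolding eventually_at_top_linorder by auto
      have "u N = 0" using key[of N] N[of N] by force
      moreover have "u (N + 1) = 0" using key[of "N+1"] N[of "N+1"] by force
      ultimately show ?thesis by blast
    next
      assume "((\<lambda>n. Im (d n)) \<longlongrightarrow> 0) at_bot"
      then have "\<forall>\<^sub>F n in at_bot. dist (Im (d n)) 0 < \<bar>Im z\<bar>"
        using nz by (intro tendstoD) auto
      then obtain N where N: "\<And>n. n \<le> N \<Longrightarrow> \<bar>Im (d n)\<bar> < \<bar>Im z\<bar>"
        unfolding eventually_at_bot_linorder by auto
      have "u (N - 1) = 0" using key[of "N - 1"] N[of "N - 1"] by force
      moreover have "u (N - 1 + 1) = 0" using key[of N] N[of N] by force
      ultimately show ?thesis by blast
    qed
    then obtain N where "u N = 0" "u (N + 1) = 0" by blast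
    then have "\<And>n. u n = 0" using no_two_zeros[OF eig] by blast
    then show False using une by blast
  qed
  obtain m where m: "Im (d m) \<noteq> 0" "Im (d (m + 1)) \<noteq> 0" using assms(3) by blast
  have "u m = 0" using key[of m] m Imz by force
  moreover have "u (m + 1) = 0" using key[of "m+1"] m Imz by force
  ultimately have "\<And>n. u n = 0" using no_two_zeros[OF eig] by blast
  then show False using une by blast
qed


end
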